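(* Let $\mathcal L$, $\mathcal P$ be series of the forms $\mathcal L=k+\sum_{n\ge1}u_n(s,t)k^{1-n}$, $\mathcal P=\sum_{n=0}^{N-1}p_n(s,t)k^{N-n}$ ($p_0\ne0$), and let $\mathcal M=\sum_{n\ge1}nt_n\mathcal L^{n-1}+x+Ns\mathcal L^{-1}+\sum_{n\ge1}v_n(s,t)\mathcal L^{-n-1}$. Then the system consisting of the $N$-dcmKP hierarchy for $(\mathcal L,\mathcal P)$ together with $$\frac{\partial\mathcal M}{\partial t_n}=\{\mathcal B_n,\mathcal M\}\ (n\ge1),\qquad \frac{\partial\mathcal M}{\partial s}=\{\log\mathcal P,\mathcal M\},\qquad \{\mathcal L,\mathcal M\}=1$$ is equivalent to the identity of 2-forms (exterior derivative in the variables $k,x,s,t$) $$d\mathcal L\wedge d\mathcal M=dk\wedge dx+\sum_{n\ge1}d\mathcal B_n\wedge dt_n+d\log\mathcal P\wedge ds.$$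
   Context: Fix a positive integer $N$. Independent variables are $k$ (spectral variable), $s$ (continuous), $x$ and $t=(t_1,t_2,\dots)$. The Poisson bracket is $\{f,g\}=\frac{\partial f}{\partial k}\frac{\partial g}{\partial x}-\frac{\partial f}{\partial x}\frac{\partial g}{\partial k}$. Projections $(\cdot)_{>0}$ refer to powers of $k$. $\log\mathcal P:=\log p_0+N\log k+\log(1+\sum_{n=1}^{N-1}(p_n/p_0)k^{-n})$ and $\log\mathcal L:=\log k+\log(\mathcal L/k)$, expanded in $k^{-1}$. The $N$-dcmKP hierarchy is $\partial_{t_n}\mathcal L=\{\mathcal B_n,\mathcal L\}$ with $\mathcal B_n:=(\mathcal L^n)_{>0}$, $\partial_s\mathcal L=\{\log\mathcal P,\mathcal L\}$, $\partial_{t_n}\log\mathcal P=\partial_s\mathcal B_n-\{\log\mathcal P,\mathcal B_n\}$ for $n\ge1$. *)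

theory Defs
  imports "HOL-Analysis.Analysis" "HOL-Computational_Algebra.Formal_Laurent_Series"
begin

text \<open>Formal series in the spectral variable k with at most finitely many positive
powers of k are represented as Laurent series in z = 1/k, i.e. as elements of
real fls: the coefficient of k^m of a series F is F at index -m.
A point of the (x,s,t) space is a triple (x, s, t) with t :: nat => real, where
t n is the time t_n (n >= 1); the dummy entry t 0 is required to be 0 and only
finitely many times are non-zero (the usual convention that makes the infinite
sum in M well defined).\<close>

type_synonym pt = "real \<times> real \<times> (nat \<Rightarrow> real)"

definition dom_pt :: "pt set" where
  "dom_pt = {(x, s, t). t 0 = 0 \<and> finite {n. t n \<noteq> 0}}"

datatype var = K | X | S | T nat

definition valid_var :: "var \<Rightarrow> bool" where
  "valid_var v = (case v of T n \<Rightarrow> n \<ge> 1 | _ \<Rightarrow> True)"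

text \<open>Moving a point along the coordinate line of a variable (k is formal and is
not a coordinate of the point).\<close>
fun shift :: "var \<Rightarrow> real \<Rightarrow> pt \<Rightarrow> pt" where
  "shift K h p = p"
| "shift X h (x, s, t) = (x + h, s, t)"
| "shift S h (x, s, t) = (x, s + h, t)"
| "shift (T n) h (x, s, t) = (x, s, t(n := t n + h))"

definition pdiff :: "var \<Rightarrow> (pt \<Rightarrow> real) \<Rightarrow> pt \<Rightarrow> real" where
  "pdiff v f p = deriv (\<lambda>h. f (shift v h p)) 0"

definition has_pdiffs :: "(pt \<Rightarrow> real) \<Rightarrow> bool" where
  "has_pdiffs f \<longleftrightarrow> (\<forall>p \<in> dom_pt. \<forall>v. valid_var v \<and> v \<noteq> K \<longrightarrow>
      (\<lambda>h. f (shift v h p)) differentiable (at 0))"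

text \<open>Build a Laurent series from a coefficient sequence (0 if the sequence is not
bounded below, which never happens for the series considered here).\<close>
definition fls_of :: "(int \<Rightarrow> real) \<Rightarrow> real fls" where
  "fls_of c = (if (\<forall>\<^sub>\<infinity> n::nat. c (- int n) = 0) then Abs_fls c else 0)"

text \<open>Partial derivatives of series-valued functions: d/dk = - z^2 d/dz, the other
partial derivatives act coefficientwise.\<close>
definition D :: "var \<Rightarrow> (pt \<Rightarrow> real fls) \<Rightarrow> pt \<Rightarrow> real fls" where
  "D v F p = (if v = K then - (fls_X ^ 2 * fls_deriv (F p))
              else fls_of (\<lambda>j. pdiff v (\<lambda>q. fls_nth (F q) j) p))"

text \<open>A 1-form (gradient) is given by its components along dk, dx, ds, dt_n.\<close>
type_synonym form1 = "var \<Rightarrow> pt \<Rightarrow> real fls"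

definition grad :: "(pt \<Rightarrow> real fls) \<Rightarrow> form1" where
  "grad F = (\<lambda>v. D v F)"

definition dvar :: "var \<Rightarrow> form1" where
  "dvar w = (\<lambda>v p. if v = w then 1 else 0)"

definition wedge :: "form1 \<Rightarrow> form1 \<Rightarrow> var \<Rightarrow> var \<Rightarrow> pt \<Rightarrow> real fls" where
  "wedge \<alpha> \<beta> a b p = \<alpha> a p * \<beta> b p - \<alpha> b p * \<beta> a p"

definition pb :: "form1 \<Rightarrow> form1 \<Rightarrow> pt \<Rightarrow> real fls" where
  "pb df dg p = df K p * dg X p - df X p * dg K p"

text \<open>Projection onto positive powers of k (= negative powers of z).\<close>
definition pos_part :: "real fls \<Rightarrow> real fls" where
  "pos_part f = fls_of (\<lambda>j. if j < 0 then fls_nth f j else 0)"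

definition Lser :: "(nat \<Rightarrow> pt \<Rightarrow> real) \<Rightarrow> pt \<Rightarrow> real fls" where
  "Lser u p = fls_of (\<lambda>j. if j = -1 then 1 else if j \<ge> 0 then u (nat j + 1) p else 0)"

definition Bser :: "(nat \<Rightarrow> pt \<Rightarrow> real) \<Rightarrow> nat \<Rightarrow> pt \<Rightarrow> real fls" where
  "Bser u n p = pos_part (Lser u p ^ n)"

text \<open>log P = log p_0 + N log k + log(1 + sum_{n=1}^{N-1} (p_n/p_0) k^(-n)); the
last logarithm is the formal series ln(1+w) composed with w.  Since log k and
log p_0 are not series, log P is handled through its gradient:
d(log p_0) = dp_0/p_0, d(N log k) = N/k dk.\<close>
definition logP_rest :: "nat \<Rightarrow> (nat \<Rightarrow> pt \<Rightarrow> real) \<Rightarrow> pt \<Rightarrow> real fls" where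
  "logP_rest N pp q = fps_to_fls (fps_ln 1 oo
      (\<Sum>n = 1..<N. fps_const (pp n q / pp 0 q) * fps_X ^ n))"

definition dlogP :: "nat \<Rightarrow> (nat \<Rightarrow> pt \<Rightarrow> real) \<Rightarrow> form1" where
  "dlogP N pp v q = (if v = K then of_nat N * fls_X + D K (logP_rest N pp) q
      else fls_const (pdiff v (pp 0) q / pp 0 q) + D v (logP_rest N pp) q)"

text \<open>The first sum is finite (finitely many t_n are non-zero); in the last sum only
finitely many terms contribute to each coefficient, since L^(-n-1) has leading
term k^(-n-1).\<close>
definition Mser :: "nat \<Rightarrow> (nat \<Rightarrow> pt \<Rightarrow> real) \<Rightarrow> (nat \<Rightarrow> pt \<Rightarrow> real) \<Rightarrow> pt \<Rightarrow> real fls" where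
  "Mser N u vv q = (case q of (x, s, t) \<Rightarrow>
      (\<Sum>n \<in> {n. n \<ge> 1 \<and> t n \<noteq> 0}. fls_const (of_nat n * t n) * Lser u q ^ (n - 1))
      + fls_const x + fls_const (of_nat N * s) * inverse (Lser u q)
      + fls_of (\<lambda>j. if j < 0 then 0 else
           (\<Sum>n = 1..nat j. vv n q * fls_nth (inverse (Lser u q) ^ (n + 1)) j)))"

definition dcmKP_system ::
  "nat \<Rightarrow> (nat \<Rightarrow> pt \<Rightarrow> real) \<Rightarrow> (nat \<Rightarrow> pt \<Rightarrow> real) \<Rightarrow> (nat \<Rightarrow> pt \<Rightarrow> real) \<Rightarrow> bool" where
  "dcmKP_system N u pp vv \<longleftrightarrow>
     (\<forall>q \<in> dom_pt.
        (\<forall>n \<ge> 1. D (T n) (Lser u) q = pb (grad (Bser u n)) (grad (Lser u)) q)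
      \<and> D S (Lser u) q = pb (dlogP N pp) (grad (Lser u)) q
      \<and> (\<forall>n \<ge> 1. dlogP N pp (T n) q
              = D S (Bser u n) q - pb (dlogP N pp) (grad (Bser u n)) q)
      \<and> (\<forall>n \<ge> 1. D (T n) (Mser N u vv) q = pb (grad (Bser u n)) (grad (Mser N u vv)) q)
      \<and> D S (Mser N u vv) q = pb (dlogP N pp) (grad (Mser N u vv)) q
      \<and> pb (grad (Lser u)) (grad (Mser N u vv)) q = 1)"

text \<open>dL /\ dM = dk /\ dx + sum_{n>=1} dB_n /\ dt_n + d log P /\ ds, compared
componentwise; for given a, b only the terms with n such that a = t_n or
b = t_n contribute to the da /\ db component.\<close>
definition two_form_identity ::
  "nat \<Rightarrow> (nat \<Rightarrow> pt \<Rightarrow> real) \<Rightarrow> (nat \<Rightarrow> pt \<Rightarrow> real) \<Rightarrow> (nat \<Rightarrow> pt \<Rightarrow> real) \<Rightarrow> bool" where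
  "two_form_identity N u pp vv \<longleftrightarrow>
     (\<forall>q \<in> dom_pt. \<forall>a b. valid_var a \<and> valid_var b \<longrightarrow>
        wedge (grad (Lser u)) (grad (Mser N u vv)) a b q
        = wedge (dvar K) (dvar X) a b q
          + (\<Sum>n \<in> {n. n \<ge> 1 \<and> (a = T n \<or> b = T n)}. wedge (grad (Bser u n)) (dvar (T n)) a b q)
          + wedge (dlogP N pp) (dvar S) a b q)"

end

theory Submission
  imports Defs
begin

lemma shift_0[simp]: "shift v 0 q = q"
  by (cases v; cases q) auto

lemma fls_of_nth:
  assumes "\<forall>j<a. c j = 0"
  shows "fls_nth (fls_of c) j = c j"
proof -
  have ev: "\<forall>\<^sub>\<infinity> n::nat. c (- int n) = 0"
    unfolding MOST_nat using assms by (intro exI[of _ "nat (-a)"]) auto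
  then show ?thesis unfolding fls_of_def using ev by simp
qed

definition okv :: "var \<Rightarrow> (pt \<Rightarrow> real fls) \<Rightarrow> pt \<Rightarrow> bool" where
  "okv v F q \<longleftrightarrow> (\<exists>a. \<forall>h j. j < a \<longrightarrow> fls_nth (F (shift v h q)) j = 0)
     \<and> (\<forall>j. (\<lambda>h. fls_nth (F (shift v h q)) j) differentiable (at 0))"

lemma D_nth:
  assumes "v \<noteq> K" "okv v F q"
  shows "fls_nth (D v F q) j = deriv (\<lambda>h. fls_nth (F (shift v h q)) j) 0"
proof -
  obtain a where a: "\<forall>h j. j < a \<longrightarrow> fls_nth (F (shift v h q)) j = 0"
    using assms(2) unfolding okv_def by blast
  have "\<forall>j<a. pdiff v (\<lambda>q. fls_nth (F q) j) q = 0"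
  proof (intro allI impI)
    fix j :: int assume "j < a"
    then have "(\<lambda>h. fls_nth (F (shift v h q)) j) = (\<lambda>h. 0)" using a by auto
    then show "pdiff v (\<lambda>q. fls_nth (F q) j) q = 0" unfolding pdiff_def by simp
  qed
  then have "fls_nth (fls_of (\<lambda>j. deriv (\<lambda>h. fls_nth (F (shift v h q)) j) 0)) j = deriv (\<lambda>h. fls_nth (F (shift v h q)) j) 0"
    unfolding pdiff_def by (rule fls_of_nth)
  then show ?thesis using assms(1) unfolding D_def pdiff_def by simp
qed

lemma D_low:
  assumes "v \<noteq> K" "okv v F q"
  shows "\<exists>a. \<forall>j<a. fls_nth (D v F q) j = 0 \<and> fls_nth (F q) j = 0"
proof -
  obtain a where a: "\<forall>h j. j < a \<longrightarrow> fls_nth (F (shift v h q)) j = 0"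
    using assms(2) unfolding okv_def by blast
  have "\<forall>j<a. fls_nth (D v F q) j = 0 \<and> fls_nth (F q) j = 0"
  proof (intro allI impI)
    fix j :: int assume "j < a"
    then have "(\<lambda>h. fls_nth (F (shift v h q)) j) = (\<lambda>h. 0)" using a by auto
    moreover have "fls_nth (F (shift v 0 q)) j = 0" using a \<open>j<a\<close> by blast
    ultimately show "fls_nth (D v F q) j = 0 \<and> fls_nth (F q) j = 0"
      using D_nth[OF assms] by simp
  qed
  then show ?thesis by blast
qed

lemma prod_nth_bound:
  fixes f g :: "'a::comm_ring_1 fls"
  assumes f: "\<forall>i<a. fls_nth f i = 0" and g: "\<forall>i<b. fls_nth g i = 0"
  shows "fls_nth (f * g) n = (\<Sum>i=a..n-b. fls_nth f i * fls_nth g (n - i))"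
proof (cases "f = 0 \<or> g = 0")
  case True then show ?thesis by auto
next
  case False
  then have fa: "a \<le> fls_subdegree f" and gb: "b \<le> fls_subdegree g"
    using f g by (auto intro: fls_subdegree_geI)
  have "fls_nth (f * g) n = (\<Sum>i=fls_subdegree f..n - fls_subdegree g. fls_nth f i * fls_nth g (n - i))"
    by (rule fls_times_nth(2))
  also have "\<dots> = (\<Sum>i=a..n-b. fls_nth f i * fls_nth g (n - i))"
  proof (rule sum.mono_neutral_left)
    show "finite {a..n-b}" by simp
    show "{fls_subdegree f..n - fls_subdegree g} \<subseteq> {a..n-b}" using fa gb by auto
    show "\<forall>i\<in>{a..n - b} - {fls_subdegree f..n - fls_subdegree g}. fls_nth f i * fls_nth g (n - i) = 0"
      by auto
  qed
  finally show ?thesis .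
qed

lemma prod_upper:
  fixes f g :: "'a::comm_ring_1 fls"
  assumes "\<forall>i>a. fls_nth f i = 0" "\<forall>i>b. fls_nth g i = 0" "n > a + b"
  shows "fls_nth (f * g) n = 0"
  unfolding fls_times_nth(2) using assms
proof (intro sum.neutral ballI)
  fix i assume "i \<in> {fls_subdegree f..n - fls_subdegree g}"
  show "fls_nth f i * fls_nth g (n - i) = 0"
  proof (cases "i > a")
    case True then show ?thesis using assms(1) by simp
  next
    case False then have "n - i > b" using assms(3) by linarith
    then show ?thesis using assms(2) by simp
  qed
qed

lemma prod_lower:
  fixes f g :: "'a::comm_ring_1 fls"
  assumes "\<forall>i<a. fls_nth f i = 0" "\<forall>i<b. fls_nth g i = 0" "n < a + b"
  shows "fls_nth (f * g) n = 0"
  unfolding fls_times_nth(2) using assms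
proof (intro sum.neutral ballI)
  fix i assume "i \<in> {fls_subdegree f..n - fls_subdegree g}"
  show "fls_nth f i * fls_nth g (n - i) = 0"
  proof (cases "i < a")
    case True then show ?thesis using assms(1) by simp
  next
    case False then have "n - i < b" using assms(3) by linarith
    then show ?thesis using assms(2) by simp
  qed
qed

lemma okv_mult:
  assumes v: "v \<noteq> K" and F: "okv v F q" and G: "okv v G q"
  shows "okv v (\<lambda>p. F p * G p) q \<and> D v (\<lambda>p. F p * G p) q = D v F q * G q + F q * D v G q"
proof -
  obtain a where a: "\<forall>h j. j < a \<longrightarrow> fls_nth (F (shift v h q)) j = 0"
    using F unfolding okv_def by blast
  obtain b where b: "\<forall>h j. j < b \<longrightarrow> fls_nth (G (shift v h q)) j = 0"
    using G unfolding okv_def by blast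
  define f where "f i h = fls_nth (F (shift v h q)) i" for i h
  define g where "g i h = fls_nth (G (shift v h q)) i" for i h
  have fd: "((f i) has_real_derivative deriv (f i) 0) (at 0)" for i
    using F unfolding okv_def f_def by (simp add: DERIV_deriv_iff_real_differentiable)
  have gd: "((g i) has_real_derivative deriv (g i) 0) (at 0)" for i
    using G unfolding okv_def g_def by (simp add: DERIV_deriv_iff_real_differentiable)
  have pn: "fls_nth (F (shift v h q) * G (shift v h q)) n = (\<Sum>i=a..n-b. f i h * g (n - i) h)" for h n
    unfolding f_def g_def by (rule prod_nth_bound) (use a b in auto)
  have der: "((\<lambda>h. fls_nth (F (shift v h q) * G (shift v h q)) n) has_real_derivative
      (\<Sum>i=a..n-b. deriv (f i) 0 * g (n - i) 0 + f i 0 * deriv (g (n-i)) 0)) (at 0)" for n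
    unfolding pn
  proof (rule DERIV_sum)
    fix i
    have "((\<lambda>h. f i h * g (n - i) h) has_real_derivative f i 0 * deriv (g (n-i)) 0 + deriv (f i) 0 * g (n - i) 0) (at 0)"
      by (rule DERIV_mult'[OF fd gd])
    then show "((\<lambda>h. f i h * g (n - i) h) has_real_derivative deriv (f i) 0 * g (n - i) 0 + f i 0 * deriv (g (n-i)) 0) (at 0)"
      by (simp add: add.commute mult.commute)
  qed
  have ok: "okv v (\<lambda>p. F p * G p) q"
    unfolding okv_def
  proof (intro conjI exI allI impI)
    fix h j assume "j < a + b"
    then show "fls_nth (F (shift v h q) * G (shift v h q)) j = 0"
      by (intro prod_lower[of a _ b]) (use a b in auto)
  next
    fix j show "(\<lambda>h. fls_nth (F (shift v h q) * G (shift v h q)) j) differentiable at 0"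
      using der[of j] real_differentiable_def by blast
  qed
  have DF: "fls_nth (D v F q) i = deriv (f i) 0" for i unfolding f_def using D_nth[OF v F] by simp
  have DG: "fls_nth (D v G q) i = deriv (g i) 0" for i unfolding g_def using D_nth[OF v G] by simp
  have DFl: "\<forall>i<a. fls_nth (D v F q) i = 0"
  proof (intro allI impI)
    fix i :: int assume "i < a"
    then have "f i = (\<lambda>h. 0)" using a unfolding f_def by auto
    then show "fls_nth (D v F q) i = 0" using DF by simp
  qed
  have DGl: "\<forall>i<b. fls_nth (D v G q) i = 0"
  proof (intro allI impI)
    fix i :: int assume "i < b"
    then have "g i = (\<lambda>h. 0)" using b unfolding g_def by auto
    then show "fls_nth (D v G q) i = 0" using DG by simp
  qed
  have Fq: "\<forall>i<a. fls_nth (F q) i = 0" using a[rule_format, of _ 0] by simp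
  have Gq: "\<forall>i<b. fls_nth (G q) i = 0" using b[rule_format, of _ 0] by simp
  have "D v (\<lambda>p. F p * G p) q = D v F q * G q + F q * D v G q"
  proof (rule fls_eqI)
    fix n
    have "fls_nth (D v (\<lambda>p. F p * G p) q) n = (\<Sum>i=a..n-b. deriv (f i) 0 * g (n - i) 0 + f i 0 * deriv (g (n-i)) 0)"
      using D_nth[OF v ok, of n] DERIV_imp_deriv[OF der[of n]] by simp
    also have "\<dots> = fls_nth (D v F q * G q) n + fls_nth (F q * D v G q) n"
      by (simp add: prod_nth_bound[OF DFl Gq] prod_nth_bound[OF Fq DGl] DF DG f_def g_def sum.distrib)
    finally show "fls_nth (D v (\<lambda>p. F p * G p) q) n = fls_nth (D v F q * G q + F q * D v G q) n"
      by simp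
  qed
  with ok show ?thesis by blast
qed

lemma okv_const:
  assumes v: "v \<noteq> K"
  shows "okv v (\<lambda>p. c) q \<and> D v (\<lambda>p. c) q = 0"
proof -
  obtain a where a: "\<forall>n<a. fls_nth c n = 0" by (rule fls_nth_vanishes_belowE)
  have ok: "okv v (\<lambda>p. c) q" unfolding okv_def using a by auto
  have "D v (\<lambda>p. c) q = 0" by (rule fls_eqI) (simp add: D_nth[OF v ok])
  with ok show ?thesis by blast
qed

lemma okv_power:
  assumes v: "v \<noteq> K" and F: "okv v F q"
  shows "okv v (\<lambda>p. F p ^ n) q \<and> D v (\<lambda>p. F p ^ n) q = of_nat n * F q ^ (n - 1) * D v F q"
proof (induction n)
  case 0
  then show ?case using okv_const[OF v, of 1 q] by simp
next
  case (Suc n)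
  have e: "(\<lambda>p. F p ^ Suc n) = (\<lambda>p. F p * F p ^ n)" by simp
  have m: "okv v (\<lambda>p. F p * F p ^ n) q \<and> D v (\<lambda>p. F p * F p ^ n) q = D v F q * F q ^ n + F q * D v (\<lambda>p. F p ^ n) q"
    using okv_mult[OF v F, of "\<lambda>p. F p ^ n"] Suc.IH by simp
  show ?case
  proof (cases n)
    case 0 then show ?thesis using m e by simp
  next
    case (Suc k)
    have "F q * F q ^ (n - 1) = F q ^ n" using Suc by simp
    then have "D v F q * F q ^ n + F q * (of_nat n * F q ^ (n - 1) * D v F q) = of_nat (Suc n) * F q ^ n * D v F q"
      by (simp add: algebra_simps)
    then show ?thesis using m e Suc.IH by simp
  qed
qed

lemma pos_part_nth: "fls_nth (pos_part f) j = (if j < 0 then fls_nth f j else 0)"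
proof -
  obtain a where a: "\<forall>n<a. fls_nth f n = 0" by (rule fls_nth_vanishes_belowE)
  show ?thesis unfolding pos_part_def by (rule fls_of_nth[of "min a 0"]) (use a in auto)
qed

lemma okv_pos:
  assumes v: "v \<noteq> K" and F: "okv v F q"
  shows "okv v (\<lambda>p. pos_part (F p)) q \<and> D v (\<lambda>p. pos_part (F p)) q = pos_part (D v F q)"
proof -
  have ok: "okv v (\<lambda>p. pos_part (F p)) q"
  proof -
    obtain a where a: "\<forall>h j. j < a \<longrightarrow> fls_nth (F (shift v h q)) j = 0"
      using F unfolding okv_def by blast
    have d: "(\<lambda>h. fls_nth (F (shift v h q)) j) differentiable (at 0)" for j
      using F unfolding okv_def by blast
    show ?thesis unfolding okv_def pos_part_nth
    proof (intro conjI exI allI impI)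
      fix h j assume "j < a" then show "(if j < 0 then fls_nth (F (shift v h q)) j else 0) = 0"
        using a by simp
    next
      fix j show "(\<lambda>h. if j < 0 then fls_nth (F (shift v h q)) j else 0) differentiable at 0"
        using d[of j] by (cases "j < 0") simp_all
    qed
  qed
  have "D v (\<lambda>p. pos_part (F p)) q = pos_part (D v F q)"
    by (rule fls_eqI) (simp add: D_nth[OF v ok] D_nth[OF v F] pos_part_nth)
  with ok show ?thesis by blast
qed

lemma DK_nth: "fls_nth (D K F q) j = - (of_int (j - 1) * fls_nth (F q) (j - 1))"
proof -
  have "fls_X ^ 2 * fls_deriv (F q) = fls_shift (- int 2) (fls_deriv (F q))"
    by (rule fls_X_power_times_conv_shift(1))
  then show ?thesis unfolding D_def by simp
qed

lemma DK_power: "D K (\<lambda>p. F p ^ n) q = of_nat n * F q ^ (n - 1) * D K F q"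
  unfolding D_def by (simp add: fls_deriv_power algebra_simps)

lemma Lser_nth: "fls_nth (Lser u p) j = (if j = -1 then 1 else if j \<ge> 0 then u (nat j + 1) p else 0)"
  unfolding Lser_def by (rule fls_of_nth[of "-1"]) auto

lemma okv_Lser:
  assumes hp: "\<forall>n\<ge>1. has_pdiffs (u n)" and q: "q \<in> dom_pt" and v: "valid_var v" "v \<noteq> K"
  shows "okv v (Lser u) q"
  unfolding okv_def Lser_nth
proof (intro conjI exI allI impI)
  fix h j assume "j < (-1::int)"
  then show "(if j = -1 then 1 else if j \<ge> 0 then u (nat j + 1) (shift v h q) else 0) = 0" by simp
next
  fix j :: int
  have "(\<lambda>h. u (nat j + 1) (shift v h q)) differentiable (at 0)"
    using hp q v unfolding has_pdiffs_def by auto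
  then show "(\<lambda>h. if j = -1 then 1 else if j \<ge> 0 then u (nat j + 1) (shift v h q) else 0) differentiable (at 0)"
    by (cases "j = -1"; cases "j \<ge> 0") simp_all
qed

lemma pos_part_diff: "pos_part (f - g) = pos_part f - pos_part g"
  by (rule fls_eqI) (simp add: pos_part_nth)

lemma pos_part_add: "pos_part (f + g) = pos_part f + pos_part g"
  by (rule fls_eqI) (simp add: pos_part_nth)

lemma ZS:
  assumes hp: "\<forall>n\<ge>1. has_pdiffs (u n)" and q: "q \<in> dom_pt" and m: "m \<ge> 1" and n: "n \<ge> 1"
    and H: "\<forall>m\<ge>1. D (T m) (Lser u) q = pb (grad (Bser u m)) (grad (Lser u)) q"
  shows "D (T m) (Bser u n) q - D (T n) (Bser u m) q = pb (grad (Bser u m)) (grad (Bser u n)) q"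
proof -
  have Bdef: "Bser u i = (\<lambda>p. pos_part (Lser u p ^ i))" for i by (rule ext) (simp add: Bser_def)
  have okX: "okv X (Lser u) q" by (rule okv_Lser[OF hp q]) (auto simp: valid_var_def)
  have okT: "i \<ge> 1 \<Longrightarrow> okv (T i) (Lser u) q" for i by (rule okv_Lser[OF hp q]) (auto simp: valid_var_def)
  define L where "L = Lser u q"
  define LK where "LK = D K (Lser u) q"
  define LX where "LX = D X (Lser u) q"
  define PK where "PK i = D K (\<lambda>p. Lser u p ^ i) q" for i
  define PX where "PX i = D X (\<lambda>p. Lser u p ^ i) q" for i
  define BK where "BK i = D K (Bser u i) q" for i
  define BX where "BX i = D X (Bser u i) q" for i
  have PK_eq: "PK i = of_nat i * L ^ (i - 1) * LK" for i
    unfolding PK_def L_def LK_def by (rule DK_power)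
  have PX_eq: "PX i = of_nat i * L ^ (i - 1) * LX" for i
    unfolding PX_def L_def LX_def using okv_power[OF _ okX, of i] by simp
  have BX_eq: "BX i = pos_part (PX i)" for i
    unfolding BX_def PX_def Bdef using okv_pos[OF _ conjunct1[OF okv_power[OF _ okX, of i]]] by simp
  have BK_nth: "fls_nth (BK i) j = - (of_int (j - 1) * (if j - 1 < 0 then fls_nth (L ^ i) (j - 1) else 0))" for i j
    unfolding BK_def Bdef DK_nth pos_part_nth L_def by simp
  have PK_nth: "fls_nth (PK i) j = - (of_int (j - 1) * fls_nth (L ^ i) (j - 1))" for i j
    unfolding PK_def DK_nth L_def by simp
  have Dt: "D (T a) (Bser u b) q = pos_part (BK a * PX b - BX a * PK b)" if "a \<ge> 1" for a b
  proof -
    have okTa: "okv (T a) (Lser u) q" using okT that by simp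
    have "D (T a) (Bser u b) q = pos_part (D (T a) (\<lambda>p. Lser u p ^ b) q)"
      unfolding Bdef using okv_pos[OF _ conjunct1[OF okv_power[OF _ okTa, of b]]] by simp
    also have "D (T a) (\<lambda>p. Lser u p ^ b) q = of_nat b * L ^ (b - 1) * D (T a) (Lser u) q"
      unfolding L_def using okv_power[OF _ okTa, of b] by simp
    also have "D (T a) (Lser u) q = BK a * LX - BX a * LK"
      using H that unfolding pb_def grad_def BK_def BX_def LX_def LK_def by simp
    also have "of_nat b * L ^ (b - 1) * (BK a * LX - BX a * LK) = BK a * PX b - BX a * PK b"
      unfolding PX_eq PK_eq by (simp add: algebra_simps)
    finally show ?thesis .
  qed
  define RK where "RK i = PK i - BK i" for i
  define RX where "RX i = PX i - BX i" for i
  have PP: "PK m * PX n - PX m * PK n = 0"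
    unfolding PK_eq PX_eq by (simp add: algebra_simps)
  have BKu: "\<forall>j>0. fls_nth (BK i) j = 0" for i by (simp add: BK_nth)
  have BXu: "\<forall>j>-1. fls_nth (BX i) j = 0" for i by (simp add: BX_eq pos_part_nth)
  have RKl: "\<forall>j<1. fls_nth (RK i) j = 0" for i by (simp add: RK_def BK_nth PK_nth)
  have RXl: "\<forall>j<0. fls_nth (RX i) j = 0" for i by (simp add: RX_def BX_eq pos_part_nth)
  have pBB: "pos_part (BK a * BX b) = BK a * BX b" for a b
  proof (rule fls_eqI)
    fix j show "fls_nth (pos_part (BK a * BX b)) j = fls_nth (BK a * BX b) j"
      using prod_upper[OF BKu BXu, of j] by (simp add: pos_part_nth)
  qed
  have pBB': "pos_part (BX a * BK b) = BX a * BK b" for a b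
    using pBB by (simp add: mult.commute)
  have pRR: "pos_part (RK a * RX b) = 0" for a b
  proof (rule fls_eqI)
    fix j show "fls_nth (pos_part (RK a * RX b)) j = fls_nth 0 j"
      using prod_lower[OF RKl RXl, of j] by (simp add: pos_part_nth)
  qed
  have pRR': "pos_part (RX a * RK b) = 0" for a b
    using pRR by (simp add: mult.commute)
  have E: "(BK m * PX n - BX m * PK n) - (BK n * PX m - BX n * PK m)
     = (BK m * BX n - BX m * BK n) - RK m * RX n + RX m * RK n + (PK m * PX n - PX m * PK n)"
    unfolding RK_def RX_def by (simp add: algebra_simps)
  have "D (T m) (Bser u n) q - D (T n) (Bser u m) q
      = pos_part ((BK m * PX n - BX m * PK n) - (BK n * PX m - BX n * PK m))"
    using Dt[OF m, of n] Dt[OF n, of m] by (simp add: pos_part_diff)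
  also have "\<dots> = BK m * BX n - BX m * BK n"
    unfolding E PP by (simp add: pos_part_diff pos_part_add pBB pBB' pRR pRR')
  also have "\<dots> = pb (grad (Bser u m)) (grad (Bser u n)) q"
    unfolding pb_def grad_def BK_def BX_def by simp
  finally show ?thesis .
qed

definition idx :: "var \<Rightarrow> nat set" where
  "idx v = (case v of T i \<Rightarrow> {i} | _ \<Rightarrow> {})"

lemma Tset:
  assumes "valid_var a" "valid_var b"
  shows "{n. n \<ge> 1 \<and> (a = T n \<or> b = T n)} = idx a \<union> idx b"
  using assms by (cases a; cases b) (auto simp: valid_var_def idx_def)

lemma solve_alg:
  fixes LK LX MK MX La Ma bK bX :: "'a::comm_ring_1"
  assumes "LK * MX - LX * MK = 1" "LK * Ma - La * MK = bK" "LX * Ma - La * MX = bX"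
  shows "La = bK * LX - bX * LK" "Ma = bK * MX - bX * MK"
proof -
  have "La = La * (LK * MX - LX * MK)" using assms(1) by simp
  also have "\<dots> = (LK * Ma - La * MK) * LX - (LX * Ma - La * MX) * LK" by (simp add: algebra_simps)
  finally show "La = bK * LX - bX * LK" using assms by simp
  have "Ma = Ma * (LK * MX - LX * MK)" using assms(1) by simp
  also have "\<dots> = (LK * Ma - La * MK) * MX - (LX * Ma - La * MX) * MK" by (simp add: algebra_simps)
  finally show "Ma = bK * MX - bX * MK" using assms by simp
qed

lemma cross_alg:
  fixes LK LX MK MX La Ma Lb Mb aK aX bK bX :: "'a::comm_ring_1"
  assumes "LK * MX - LX * MK = 1" "La = aK * LX - aX * LK" "Ma = aK * MX - aX * MK"
    "Lb = bK * LX - bX * LK" "Mb = bK * MX - bX * MK"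
  shows "La * Mb - Lb * Ma = aK * bX - aX * bK"
proof -
  have "La * Mb - Lb * Ma = (aK * bX - aX * bK) * (LK * MX - LX * MK)"
    unfolding assms(2-5) by (simp add: algebra_simps)
  then show ?thesis using assms(1) by simp
qed

theorem mainTheorem8:
  fixes N :: nat
    and u :: "nat \<Rightarrow> pt \<Rightarrow> real"
    and pp :: "nat \<Rightarrow> pt \<Rightarrow> real"
    and vv :: "nat \<Rightarrow> pt \<Rightarrow> real"
  assumes "N \<ge> 1"
    and "\<forall>q \<in> dom_pt. pp 0 q \<noteq> 0"
    and "\<forall>n \<ge> 1. has_pdiffs (u n)"
    and "\<forall>n < N. has_pdiffs (pp n)"
    and "\<forall>n \<ge> 1. has_pdiffs (vv n)"
  shows "dcmKP_system N u pp vv \<longleftrightarrow> two_form_identity N u pp vv"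
proof
  assume sys: "dcmKP_system N u pp vv"
  show "two_form_identity N u pp vv"
    unfolding two_form_identity_def
  proof (intro ballI allI impI)
    fix q a b assume q: "q \<in> dom_pt" and ab: "valid_var a \<and> valid_var b"
    define LK where "LK = D K (Lser u) q"
    define LX where "LX = D X (Lser u) q"
    define MK where "MK = D K (Mser N u vv) q"
    define MX where "MX = D X (Mser N u vv) q"
    define PK where "PK = dlogP N pp K q"
    define PX where "PX = dlogP N pp X q"
    define BK where "BK i = D K (Bser u i) q" for i
    define BX where "BX i = D X (Bser u i) q" for i
    define hK where "hK v = (case v of K \<Rightarrow> 0 | X \<Rightarrow> 1 | S \<Rightarrow> PK | T i \<Rightarrow> BK i)" for v
    define hX where "hX v = (case v of K \<Rightarrow> -1 | X \<Rightarrow> 0 | S \<Rightarrow> PX | T i \<Rightarrow> BX i)" for v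
    have Lt: "\<forall>n\<ge>1. D (T n) (Lser u) q = pb (grad (Bser u n)) (grad (Lser u)) q"
      and Ls: "D S (Lser u) q = pb (dlogP N pp) (grad (Lser u)) q"
      and Pt: "\<forall>n\<ge>1. dlogP N pp (T n) q = D S (Bser u n) q - pb (dlogP N pp) (grad (Bser u n)) q"
      and Mt: "\<forall>n\<ge>1. D (T n) (Mser N u vv) q = pb (grad (Bser u n)) (grad (Mser N u vv)) q"
      and Ms: "D S (Mser N u vv) q = pb (dlogP N pp) (grad (Mser N u vv)) q"
      and LM: "pb (grad (Lser u)) (grad (Mser N u vv)) q = 1"
      using sys q unfolding dcmKP_system_def by auto
    have LM1: "LK * MX - LX * MK = 1" using LM unfolding pb_def grad_def LK_def LX_def MK_def MX_def .
    have h: "D v (Lser u) q = hK v * LX - hX v * LK \<and> D v (Mser N u vv) q = hK v * MX - hX v * MK"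
      if "valid_var v" for v
      using that Lt Mt Ls Ms
      by (cases v) (auto simp: hK_def hX_def valid_var_def pb_def grad_def LK_def LX_def MK_def MX_def PK_def PX_def BK_def BX_def)
    have lhs: "wedge (grad (Lser u)) (grad (Mser N u vv)) a b q = hK a * hX b - hX a * hK b"
      unfolding wedge_def grad_def
      by (rule cross_alg[OF LM1]) (use h ab in auto)
    have ZS': "D (T m) (Bser u n) q - D (T n) (Bser u m) q = BK m * BX n - BX m * BK n"
      if "m \<ge> 1" "n \<ge> 1" for m n
      using ZS[OF assms(3) q that Lt] unfolding pb_def grad_def BK_def BX_def .
    have Pt': "dlogP N pp (T n) q = D S (Bser u n) q - (PK * BX n - PX * BK n)" if "n \<ge> 1" for n
      using Pt that unfolding pb_def grad_def PK_def PX_def BK_def BX_def by simp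
    show "wedge (grad (Lser u)) (grad (Mser N u vv)) a b q =
       wedge (dvar K) (dvar X) a b q +
       (\<Sum>n\<in>{n. 1 \<le> n \<and> (a = T n \<or> b = T n)}. wedge (grad (Bser u n)) (dvar (T n)) a b q) +
       wedge (dlogP N pp) (dvar S) a b q"
      unfolding lhs Tset[OF ab[THEN conjunct1] ab[THEN conjunct2]]
    proof (cases a; cases b)
      fix i j assume a: "a = T i" and b: "b = T j"
      then have ij: "i \<ge> 1" "j \<ge> 1" using ab by (auto simp: valid_var_def)
      show "hK a * hX b - hX a * hK b =
        wedge (dvar K) (dvar X) a b q +
        (\<Sum>n\<in>idx a \<union> idx b. wedge (grad (Bser u n)) (dvar (T n)) a b q) +
        wedge (dlogP N pp) (dvar S) a b q"
      proof (cases "i = j")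
        case True then show ?thesis using a b by (simp add: idx_def wedge_def dvar_def)
      next
        case False
        then show ?thesis using a b ZS'[OF ij]
          by (simp add: idx_def wedge_def dvar_def hK_def hX_def grad_def BK_def BX_def algebra_simps)
      qed
    qed (use ab Pt' in \<open>auto simp: idx_def wedge_def dvar_def hK_def hX_def grad_def BK_def BX_def PK_def PX_def valid_var_def algebra_simps\<close>)
  qed
next
  assume tf: "two_form_identity N u pp vv"
  show "dcmKP_system N u pp vv"
    unfolding dcmKP_system_def
  proof (intro ballI)
    fix q assume q: "q \<in> dom_pt"
    have I: "wedge (grad (Lser u)) (grad (Mser N u vv)) a b q
        = wedge (dvar K) (dvar X) a b q
          + (\<Sum>n \<in> idx a \<union> idx b. wedge (grad (Bser u n)) (dvar (T n)) a b q)
          + wedge (dlogP N pp) (dvar S) a b q" if "valid_var a" "valid_var b" for a b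
      using tf q that Tset[OF that] unfolding two_form_identity_def by auto
    define LK where "LK = D K (Lser u) q"
    define LX where "LX = D X (Lser u) q"
    define MK where "MK = D K (Mser N u vv) q"
    define MX where "MX = D X (Mser N u vv) q"
    have vK: "valid_var K" and vX: "valid_var X" and vS: "valid_var S" and vT: "\<And>n. n \<ge> 1 \<Longrightarrow> valid_var (T n)"
      by (auto simp: valid_var_def)
    have LM1: "LK * MX - LX * MK = 1"
      using I[OF vK vX] by (simp add: idx_def wedge_def dvar_def grad_def LK_def LX_def MK_def MX_def)
    have tK: "LK * D (T n) (Mser N u vv) q - D (T n) (Lser u) q * MK = D K (Bser u n) q"
      and tX: "LX * D (T n) (Mser N u vv) q - D (T n) (Lser u) q * MX = D X (Bser u n) q"
      and tS: "D S (Lser u) q * D (T n) (Mser N u vv) q - D (T n) (Lser u) q * D S (Mser N u vv) q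
               = D S (Bser u n) q - dlogP N pp (T n) q"
      if "n \<ge> 1" for n
      using I[OF vK vT[OF that]] I[OF vX vT[OF that]] I[OF vS vT[OF that]]
      by (simp_all add: idx_def wedge_def dvar_def grad_def LK_def LX_def MK_def MX_def)
    have sK: "LK * D S (Mser N u vv) q - D S (Lser u) q * MK = dlogP N pp K q"
      and sX: "LX * D S (Mser N u vv) q - D S (Lser u) q * MX = dlogP N pp X q"
      using I[OF vK vS] I[OF vX vS]
      by (simp_all add: idx_def wedge_def dvar_def grad_def LK_def LX_def MK_def MX_def)
    have solT: "D (T n) (Lser u) q = D K (Bser u n) q * LX - D X (Bser u n) q * LK"
      "D (T n) (Mser N u vv) q = D K (Bser u n) q * MX - D X (Bser u n) q * MK" if "n \<ge> 1" for n
      using solve_alg[OF LM1 tK[OF that] tX[OF that]] by simp_all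
    note solS = solve_alg[OF LM1 sK sX]
    have Pt: "dlogP N pp (T n) q = D S (Bser u n) q - pb (dlogP N pp) (grad (Bser u n)) q" if "n \<ge> 1" for n
    proof -
      have "D S (Lser u) q * D (T n) (Mser N u vv) q - D (T n) (Lser u) q * D S (Mser N u vv) q
          = dlogP N pp K q * D X (Bser u n) q - dlogP N pp X q * D K (Bser u n) q"
        by (rule cross_alg[OF LM1]) (use solT[OF that] solS in auto)
      then show ?thesis using tS[OF that] unfolding pb_def grad_def by (simp add: algebra_simps)
    qed
    show "(\<forall>n\<ge>1. D (T n) (Lser u) q = pb (grad (Bser u n)) (grad (Lser u)) q) \<and>
       D S (Lser u) q = pb (dlogP N pp) (grad (Lser u)) q \<and>
       (\<forall>n\<ge>1. dlogP N pp (T n) q = D S (Bser u n) q - pb (dlogP N pp) (grad (Bser u n)) q) \<and>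
       (\<forall>n\<ge>1. D (T n) (Mser N u vv) q = pb (grad (Bser u n)) (grad (Mser N u vv)) q) \<and>
       D S (Mser N u vv) q = pb (dlogP N pp) (grad (Mser N u vv)) q \<and>
       pb (grad (Lser u)) (grad (Mser N u vv)) q = 1"
      using solT solS Pt LM1
      by (auto simp: pb_def grad_def LK_def LX_def MK_def MX_def)
  qed
qed

end
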